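(* Let $\mathbf C$ be an admissible category of coframes. There is an identity-on-morphisms functor $(L,\lim_L)\mapsto(L,\operatorname{adh}_L)$ from $\mathbf C^{\mathrm{pretop}}$ to $\mathbf C^{\mathrm{adh}}$, which is right adjoint to the identity-on-morphisms functor $(L,\nu)\mapsto(L,\lim_\nu)$ from $\mathbf C^{\mathrm{adh}}$ to $\mathbf C^{\mathrm{pretop}}$. The same holds with $\mathbf C^{\mathrm{pretop}}_{\mathrm{cl}}$ in place of $\mathbf C^{\mathrm{pretop}}$.
   Context: A category of coframes has coframes as objects and coframe morphisms (preserving arbitrary infima and finite suprema); it is admissible if every powerset is an object and there are classes of index sets $\mathcal I,\mathcal J$ with morphisms exactly the monotone maps preserving existing $I$-indexed infima ($I\in\mathcal I$) and $J$-indexed suprema ($J\in\mathcal J$). Every coframe morphism $\varphi$ has a left adjoint $\varphi_!$. $\mathcal C_L$ is the set of complemented elements of $L$. A filter on $L$ is a non-empty upward-closed subset closed under binary meets ($L$ allowed); $\mathbb F L$ is the set of filters. For $\mathcal A\subseteq L$, its grill is $\mathcal A^\#=\{\ell\in L: a\wedge\ell\ne\bot\text{ for all }a\in\mathcal A\}$. A convergence $\mathbf C$-object is $(L,\lim_L)$ with $\lim_L:\mathbb F L\to L$ monotone; morphisms are $\mathbf C$-morphisms $\varphi:L\to L'$ with $\lim_{L'}\mathcal F\le\varphi(\lim_L\varphi^{-1}(\mathcal F))$. It is pretopological if $\lim_L\bigcap_i\mathcal F_i=\bigwedge_i\lim_L\mathcal F_i$ for all families of filters, and classical if $\mathcal F\cap\mathcal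 C_L=\mathcal G\cap\mathcal C_L$ implies $\lim_L\mathcal F=\lim_L\mathcal G$; $\mathbf C^{\mathrm{pretop}}$ and $\mathbf C^{\mathrm{pretop}}_{\mathrm{cl}}$ are the corresponding full subcategories. The raw adherence is $\operatorname{adh}^0_L\ell=\bigvee\{\lim_L\mathcal F:\mathcal F\in\mathbb F L,\ \ell\in\mathcal F^\#\}$, and the adherence is $\operatorname{adh}_L\ell=\bigwedge\{\operatorname{adh}^0_L a: a\in\mathcal C_L,\ a\ge\ell\}$. An adherence structure on $L$ is a monotone $\nu:L\to L$ preserving finite suprema of complemented elements and satisfying $\nu(\ell)=\bigwedge\{\nu(a):a\in\mathcal C_L,a\ge\ell\}$. An adherence $\mathbf C$-object is $(L,\nu_L)$ with $\nu_L$ an adherence structure; $\mathbf C^{\mathrm{adh}}$ has as morphisms the $\mathbf C$-morphisms $\varphi:L\to L'$ with $\nu_{L'}(\ell')\le\varphi(\nu_L(\varphi_!(\ell')))$ for all $\ell'\in L'$. For an adherence structure $\nu$, $\lim_\nu\mathcal F=\bigwedge\{\nu(a):a\in\mathcal C_L\cap\mathcal F^\#\}$. *)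

theory Defs
  imports Main
begin

class coframe = complete_lattice +
  assumes coframe_sup_Inf: "sup a (Inf S) = (INF b\<in>S. sup a b)"

definition cofr_mor :: "('a::coframe \<Rightarrow> 'b::coframe) \<Rightarrow> bool" where
  "cofr_mor \<phi> \<longleftrightarrow> (\<forall>S. \<phi> (Inf S) = Inf (\<phi> ` S)) \<and> \<phi> bot = bot
      \<and> (\<forall>a b. \<phi> (sup a b) = sup (\<phi> a) (\<phi> b))"

definition ladj :: "('a::coframe \<Rightarrow> 'b::coframe) \<Rightarrow> 'b \<Rightarrow> 'a" where
  "ladj \<phi> y = Inf {x. y \<le> \<phi> x}"

definition compl_elems :: "'a::coframe set" where
  "compl_elems = {a. \<exists>b. inf a b = bot \<and> sup a b = top}"

text \<open>Filters on L (the improper filter L itself allowed).\<close>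
definition lfilter :: "'a::coframe set \<Rightarrow> bool" where
  "lfilter F \<longleftrightarrow> F \<noteq> {} \<and> (\<forall>x y. x \<in> F \<longrightarrow> x \<le> y \<longrightarrow> y \<in> F)
      \<and> (\<forall>x y. x \<in> F \<longrightarrow> y \<in> F \<longrightarrow> inf x y \<in> F)"

definition grill :: "'a::coframe set \<Rightarrow> 'a set" where
  "grill A = {l. \<forall>a\<in>A. inf a l \<noteq> bot}"

text \<open>A limit operation lim : FL -> L (represented as a total function, only its
  values on filters matter), monotone on filters.\<close>
definition conv_obj :: "('a::coframe set \<Rightarrow> 'a) \<Rightarrow> bool" where
  "conv_obj lim \<longleftrightarrow> (\<forall>F G. lfilter F \<longrightarrow> lfilter G \<longrightarrow> F \<subseteq> G \<longrightarrow> lim F \<le> lim G)"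

definition pretop :: "('a::coframe set \<Rightarrow> 'a) \<Rightarrow> bool" where
  "pretop lim \<longleftrightarrow> conv_obj lim \<and>
     (\<forall>\<FF>. (\<forall>F\<in>\<FF>. lfilter F) \<longrightarrow> lim (\<Inter>\<FF>) = (INF F\<in>\<FF>. lim F))"

definition classical :: "('a::coframe set \<Rightarrow> 'a) \<Rightarrow> bool" where
  "classical lim \<longleftrightarrow> (\<forall>F G. lfilter F \<longrightarrow> lfilter G \<longrightarrow>
       F \<inter> compl_elems = G \<inter> compl_elems \<longrightarrow> lim F = lim G)"

definition conv_mor :: "('a::coframe set \<Rightarrow> 'a) \<Rightarrow> ('b::coframe set \<Rightarrow> 'b) \<Rightarrow> ('a \<Rightarrow> 'b) \<Rightarrow> bool" where
  "conv_mor lim lim' \<phi> \<longleftrightarrow> cofr_mor \<phi> \<and>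
     (\<forall>F. lfilter F \<longrightarrow> lim' F \<le> \<phi> (lim (\<phi> -` F)))"

definition adh0 :: "('a::coframe set \<Rightarrow> 'a) \<Rightarrow> 'a \<Rightarrow> 'a" where
  "adh0 lim l = Sup {lim F | F. lfilter F \<and> l \<in> grill F}"

definition adh :: "('a::coframe set \<Rightarrow> 'a) \<Rightarrow> 'a \<Rightarrow> 'a" where
  "adh lim l = Inf {adh0 lim a | a. a \<in> compl_elems \<and> l \<le> a}"

definition adh_structure :: "('a::coframe \<Rightarrow> 'a) \<Rightarrow> bool" where
  "adh_structure \<nu> \<longleftrightarrow> mono \<nu> \<and> \<nu> bot = bot
     \<and> (\<forall>a b. a \<in> compl_elems \<longrightarrow> b \<in> compl_elems \<longrightarrow> \<nu> (sup a b) = sup (\<nu> a) (\<nu> b))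
     \<and> (\<forall>l. \<nu> l = Inf {\<nu> a | a. a \<in> compl_elems \<and> l \<le> a})"

definition adh_mor :: "('a::coframe \<Rightarrow> 'a) \<Rightarrow> ('b::coframe \<Rightarrow> 'b) \<Rightarrow> ('a \<Rightarrow> 'b) \<Rightarrow> bool" where
  "adh_mor \<nu> \<nu>' \<phi> \<longleftrightarrow> cofr_mor \<phi> \<and> (\<forall>y. \<nu>' y \<le> \<phi> (\<nu> (ladj \<phi> y)))"

definition lim_of :: "('a::coframe \<Rightarrow> 'a) \<Rightarrow> 'a set \<Rightarrow> 'a" where
  "lim_of \<nu> F = Inf {\<nu> a | a. a \<in> compl_elems \<inter> grill F}"

end

theory Submission
  imports Defs
begin


context coframe begin
subclass distrib_lattice
proof
  fix x y z :: 'a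
  have "sup x (Inf {y, z}) = (INF b\<in>{y,z}. sup x b)" by (rule coframe_sup_Inf)
  then show "sup x (inf y z) = inf (sup x y) (sup x z)" by simp
qed
end

lemma compl_le:
  fixes a b x :: "'a::coframe"
  assumes "inf a b = bot" "sup a b = top" "inf x a = bot" shows "x \<le> b"
proof -
  have "inf x (sup a b) = sup (inf x a) (inf x b)" by (rule inf_sup_distrib1)
  then have "x = inf x b" using assms by simp
  then show ?thesis using inf.cobounded2[of x b] by (rule ssubst)
qed

lemma filter_grill:
  fixes a b :: "'a::coframe"
  assumes F: "lfilter F" and ab: "inf a b = bot" "sup a b = top"
  shows "a \<notin> grill F \<longleftrightarrow> b \<in> F"
proof
  assume "a \<notin> grill F"
  then obtain f where f: "f \<in> F" "inf f a = bot" unfolding grill_def by auto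
  then have "f \<le> b" using compl_le[OF ab f(2)] by blast
  then show "b \<in> F" using F f unfolding lfilter_def by blast
next
  assume "b \<in> F"
  moreover have "inf b a = bot" using ab by (simp add: inf_commute)
  ultimately show "a \<notin> grill F" unfolding grill_def by auto
qed

lemma compl_elems_sym:
  fixes a :: "'a::coframe"
  assumes "a \<in> compl_elems"
  obtains b where "inf a b = bot" "sup a b = top" "b \<in> compl_elems"
proof -
  obtain b where b: "inf a b = bot" "sup a b = top" using assms unfolding compl_elems_def by auto
  then have "inf b a = bot" "sup b a = top" by (simp_all add: inf_commute sup_commute)
  then have "b \<in> compl_elems" unfolding compl_elems_def by blast
  then show ?thesis using b that by blast
qed

lemma grill_up:
  fixes l :: "'a::coframe"
  assumes "l \<in> grill F" "l \<le> l'" shows "l' \<in> grill F"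
  unfolding grill_def
proof (clarify)
  fix a assume a: "a \<in> F" "inf a l' = bot"
  have "inf a l \<le> inf a l'" using assms(2) by (rule inf_mono[OF order_refl])
  then have "inf a l = bot" using a(2) by (simp add: le_bot)
  then show False using assms(1) a(1) unfolding grill_def by auto
qed
lemma grill_anti:
  fixes F :: "'a::coframe set"
  shows "F \<subseteq> G \<Longrightarrow> grill G \<subseteq> grill F"
  unfolding grill_def by auto

lemma adh0_mono: "l \<le> l' \<Longrightarrow> adh0 lim l \<le> adh0 lim l'"
  unfolding adh0_def
  by (rule Sup_subset_mono) (auto intro: grill_up)

lemma adh0_upper: "lfilter G \<Longrightarrow> l \<in> grill G \<Longrightarrow> lim G \<le> adh0 lim l"
  unfolding adh0_def by (rule Sup_upper) auto

lemma adh_compl: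
  assumes "a \<in> compl_elems" shows "adh lim a = adh0 lim a"
  unfolding adh_def
proof (rule antisym)
  show "Inf {adh0 lim aa |aa. aa \<in> compl_elems \<and> a \<le> aa} \<le> adh0 lim a"
    by (rule Inf_lower) (use assms in auto)
  show "adh0 lim a \<le> Inf {adh0 lim aa |aa. aa \<in> compl_elems \<and> a \<le> aa}"
    by (rule Inf_greatest) (auto intro: adh0_mono)
qed

lemma compl_sup:
  fixes a b :: "'a::coframe"
  assumes "a \<in> compl_elems" "b \<in> compl_elems" shows "sup a b \<in> compl_elems"
proof -
  obtain a' where a: "inf a a' = bot" "sup a a' = top" using assms(1) compl_elems_sym by blast
  obtain b' where b: "inf b b' = bot" "sup b b' = top" using assms(2) compl_elems_sym by blast
  have "inf (sup a b) (inf a' b') = sup (inf a (inf a' b')) (inf b (inf a' b'))"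
    by (simp add: inf_sup_distrib2)
  also have "\<dots> = bot"
  proof -
    have "inf a (inf a' b') = bot" using a(1) by (simp add: inf.assoc[symmetric])
    moreover have "inf b (inf a' b') = bot" using b(1) by (simp add: inf.left_commute[of b a'])
    ultimately show ?thesis by simp
  qed
  finally have 1: "inf (sup a b) (inf a' b') = bot" .
  have "sup (sup a b) (inf a' b') = inf (sup (sup a b) a') (sup (sup a b) b')"
    by (simp add: sup_inf_distrib1)
  also have "\<dots> = top"
  proof -
    have "sup (sup a b) a' = sup b (sup a a')" by (simp add: sup.assoc sup.commute sup.left_commute)
    moreover have "sup (sup a b) b' = sup a (sup b b')" by (simp add: sup.assoc sup.commute sup.left_commute)
    ultimately show ?thesis using a(2) b(2) by simp
  qed
  finally show ?thesis using 1 unfolding compl_elems_def by blast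
qed

lemma cofr_mono: "cofr_mor \<phi> \<Longrightarrow> mono \<phi>"
  unfolding cofr_mor_def mono_def
  by (metis le_iff_sup)

lemma cofr_top: "cofr_mor \<phi> \<Longrightarrow> \<phi> top = top"
  unfolding cofr_mor_def by (auto dest: spec[of _ "{}"])

lemma cofr_inf: "cofr_mor \<phi> \<Longrightarrow> \<phi> (inf a b) = inf (\<phi> a) (\<phi> b)"
  unfolding cofr_mor_def by (auto dest: spec[of _ "{a,b}"])

lemma cofr_bot: "cofr_mor \<phi> \<Longrightarrow> \<phi> bot = bot"
  unfolding cofr_mor_def by auto

lemma cofr_sup: "cofr_mor \<phi> \<Longrightarrow> \<phi> (sup a b) = sup (\<phi> a) (\<phi> b)"
  unfolding cofr_mor_def by auto

lemma cofr_compl: "cofr_mor \<phi> \<Longrightarrow> inf a b = bot \<Longrightarrow> sup a b = top \<Longrightarrow>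
   inf (\<phi> a) (\<phi> b) = bot \<and> sup (\<phi> a) (\<phi> b) = top"
  by (metis cofr_inf cofr_sup cofr_bot cofr_top)

lemma cofr_compl_elems: "cofr_mor \<phi> \<Longrightarrow> a \<in> compl_elems \<Longrightarrow> \<phi> a \<in> compl_elems"
  unfolding compl_elems_def using cofr_compl by blast

lemma ladj_unit: "cofr_mor \<phi> \<Longrightarrow> y \<le> \<phi> (ladj \<phi> y)"
  unfolding ladj_def cofr_mor_def by (auto intro: Inf_greatest)

lemma ladj_le: "y \<le> \<phi> x \<Longrightarrow> ladj \<phi> y \<le> x"
  unfolding ladj_def by (auto intro: Inf_lower)

lemma preimage_filter:
  assumes "cofr_mor \<phi>" "lfilter G" shows "lfilter (\<phi> -` G)"
proof -
  obtain g where "g \<in> G" using assms(2) unfolding lfilter_def by auto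
  then have "top \<in> G" using assms(2) unfolding lfilter_def by auto
  then have "top \<in> \<phi> -` G" using cofr_top[OF assms(1)] by simp
  moreover have "\<forall>x y. x \<in> \<phi> -` G \<longrightarrow> x \<le> y \<longrightarrow> y \<in> \<phi> -` G"
    using assms cofr_mono[OF assms(1)] unfolding lfilter_def mono_def by auto
  moreover have "\<forall>x y. x \<in> \<phi> -` G \<longrightarrow> y \<in> \<phi> -` G \<longrightarrow> inf x y \<in> \<phi> -` G"
    using assms cofr_inf[OF assms(1)] unfolding lfilter_def by auto
  ultimately show ?thesis unfolding lfilter_def by blast
qed

lemma grill_pre1:
  assumes "cofr_mor \<phi>" "\<phi> a \<in> grill G" shows "a \<in> grill (\<phi> -` G)"
  unfolding grill_def
proof (clarify)
  fix x assume x: "\<phi> x \<in> G" "inf x a = bot"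
  have "inf (\<phi> x) (\<phi> a) = bot" using x(2) by (simp add: cofr_inf[OF assms(1), symmetric] cofr_bot[OF assms(1)])
  then show False using assms(2) x(1) unfolding grill_def by auto
qed

lemma grill_pre2:
  assumes "cofr_mor \<phi>" "lfilter G" "a \<in> compl_elems" "a \<in> grill (\<phi> -` G)"
  shows "\<phi> a \<in> grill G"
proof -
  obtain b where b: "inf a b = bot" "sup a b = top" using assms(3) compl_elems_sym by blast
  have pb: "inf (\<phi> a) (\<phi> b) = bot" "sup (\<phi> a) (\<phi> b) = top" using cofr_compl[OF assms(1) b] by auto
  have "b \<notin> \<phi> -` G" using filter_grill[OF preimage_filter[OF assms(1,2)] b] assms(4) by blast
  then show ?thesis using filter_grill[OF assms(2) pb] by auto
qed



lemma bot_compl: "(bot::'a::coframe) \<in> compl_elems"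
  unfolding compl_elems_def by auto

lemma grill_sup:
  fixes a b :: "'a::coframe"
  assumes F: "lfilter F" and s: "sup a b \<in> grill F"
  shows "a \<in> grill F \<or> b \<in> grill F"
proof (rule ccontr)
  assume "\<not> (a \<in> grill F \<or> b \<in> grill F)"
  then obtain f1 f2 where f: "f1 \<in> F" "inf f1 a = bot" "f2 \<in> F" "inf f2 b = bot"
    unfolding grill_def by auto
  have fF: "inf f1 f2 \<in> F" using F f unfolding lfilter_def by blast
  have "inf (inf f1 f2) (sup a b) = sup (inf (inf f1 f2) a) (inf (inf f1 f2) b)"
    by (simp add: inf_sup_distrib1)
  also have "inf (inf f1 f2) a = bot" using f(2) by (metis inf.assoc inf.commute inf_bot_left)
  also have "inf (inf f1 f2) b = bot" using f(4) by (simp add: inf.assoc)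
  finally show False using s fF unfolding grill_def by auto
qed

lemma bot_not_grill: "lfilter F \<Longrightarrow> (bot::'a::coframe) \<notin> grill F"
  unfolding grill_def lfilter_def by auto

lemma adh0_bot: "adh0 lim (bot::'a::coframe) = bot"
  unfolding adh0_def using bot_not_grill by auto

lemma partA: "adh_structure (adh (lim :: 'a::coframe set \<Rightarrow> 'a))"
  unfolding adh_structure_def
proof (intro conjI allI impI)
  show "mono (adh lim)"
    unfolding mono_def adh_def by (auto intro!: Inf_superset_mono)
  show "adh lim bot = bot"
  proof -
    have "adh lim bot \<le> adh0 lim bot" unfolding adh_def
      by (rule Inf_lower) (use bot_compl in auto)
    then show ?thesis using adh0_bot by (metis bot.extremum_uniqueI)
  qed
next
  fix a b :: 'a assume ab: "a \<in> compl_elems" "b \<in> compl_elems"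
  have "adh0 lim (sup a b) \<le> sup (adh0 lim a) (adh0 lim b)"
    unfolding adh0_def[of lim "sup a b"]
  proof (rule Sup_least, clarify)
    fix F assume F: "lfilter F" "sup a b \<in> grill F"
    then show "lim F \<le> sup (adh0 lim a) (adh0 lim b)"
      using grill_sup[OF F] adh0_upper[OF F(1)] by (meson le_supI1 le_supI2)
  qed
  moreover have "sup (adh0 lim a) (adh0 lim b) \<le> adh0 lim (sup a b)"
    by (simp add: adh0_mono)
  ultimately show "adh lim (sup a b) = sup (adh lim a) (adh lim b)"
    using adh_compl[OF ab(1), of lim] adh_compl[OF ab(2), of lim] adh_compl[OF compl_sup[OF ab], of lim]
    by simp
next
  fix l :: 'a
  have "{adh lim a |a. a \<in> compl_elems \<and> l \<le> a} = {adh0 lim a |a. a \<in> compl_elems \<and> l \<le> a}"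
    using adh_compl by (auto simp: adh_compl) (metis adh_compl)
  then show "adh lim l = Inf {adh lim a |a. a \<in> compl_elems \<and> l \<le> a}"
    unfolding adh_def[of lim l] by simp
qed

lemma grill_Inter:
  fixes a :: "'a::coframe"
  assumes a: "a \<in> compl_elems" and FF: "\<forall>F\<in>\<FF>. lfilter F" and g: "a \<in> grill (\<Inter>\<FF>)"
  shows "\<exists>F\<in>\<FF>. a \<in> grill F"
proof (rule ccontr)
  assume nt: "\<not> (\<exists>F\<in>\<FF>. a \<in> grill F)"
  obtain b where b: "inf a b = bot" "sup a b = top" using a compl_elems_sym by blast
  have "b \<in> F" if "F \<in> \<FF>" for F
  proof -
    have "lfilter F" using FF that by blast
    moreover have "a \<notin> grill F" using nt that by blast
    ultimately show ?thesis using filter_grill[OF _ b(1,2)] by blast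
  qed
  then have "b \<in> \<Inter>\<FF>" by blast
  moreover have "inf b a = bot" using b by (simp add: inf.commute)
  ultimately show False using g unfolding grill_def by auto
qed

lemma partB:
  fixes \<nu> :: "'a::coframe \<Rightarrow> 'a"
  assumes "adh_structure \<nu>"
  shows "pretop (lim_of \<nu>) \<and> classical (lim_of \<nu>)"
proof (intro conjI)
  have conv: "conv_obj (lim_of \<nu>)"
    unfolding conv_obj_def lim_of_def
  proof (intro allI impI)
    fix F G :: "'a set" assume "F \<subseteq> G"
    then have "grill G \<subseteq> grill F" by (rule grill_anti)
    show "Inf {\<nu> a |a. a \<in> compl_elems \<inter> grill F} \<le> Inf {\<nu> a |a. a \<in> compl_elems \<inter> grill G}"
      by (rule Inf_superset_mono) (use \<open>grill G \<subseteq> grill F\<close> in auto)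
  qed
  show "pretop (lim_of \<nu>)"
    unfolding pretop_def
  proof (intro conjI allI impI conv)
    fix \<FF> :: "'a set set" assume FF: "\<forall>F\<in>\<FF>. lfilter F"
    show "lim_of \<nu> (\<Inter>\<FF>) = (INF F\<in>\<FF>. lim_of \<nu> F)"
    proof (rule antisym)
      show "lim_of \<nu> (\<Inter>\<FF>) \<le> (INF F\<in>\<FF>. lim_of \<nu> F)"
      proof (rule INF_greatest)
        fix F assume "F \<in> \<FF>"
        then have "grill F \<subseteq> grill (\<Inter>\<FF>)" by (intro grill_anti) auto
        show "lim_of \<nu> (\<Inter>\<FF>) \<le> lim_of \<nu> F"
          unfolding lim_of_def by (rule Inf_superset_mono) (use \<open>grill F \<subseteq> grill (\<Inter>\<FF>)\<close> in auto)
      qed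
      show "(INF F\<in>\<FF>. lim_of \<nu> F) \<le> lim_of \<nu> (\<Inter>\<FF>)"
        unfolding lim_of_def[of \<nu> "\<Inter>\<FF>"]
      proof (rule Inf_greatest, clarify)
        fix a assume a: "a \<in> compl_elems" "a \<in> grill (\<Inter>\<FF>)"
        then obtain F where F: "F \<in> \<FF>" "a \<in> grill F" using grill_Inter FF by blast
        have "(INF F\<in>\<FF>. lim_of \<nu> F) \<le> lim_of \<nu> F" using F(1) by (rule INF_lower)
        also have "\<dots> \<le> \<nu> a" unfolding lim_of_def by (rule Inf_lower) (use a F in auto)
        finally show "(INF F\<in>\<FF>. lim_of \<nu> F) \<le> \<nu> a" .
      qed
    qed
  qed
  show "classical (lim_of \<nu>)"
    unfolding classical_def
  proof (intro allI impI)
    fix F G :: "'a set" assume F: "lfilter F" and G: "lfilter G" and eq: "F \<inter> compl_elems = G \<inter> compl_elems"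
    have "compl_elems \<inter> grill F = compl_elems \<inter> grill G"
    proof (intro set_eqI iffI)
      fix a assume a: "a \<in> compl_elems \<inter> grill F"
      obtain b where b: "inf a b = bot" "sup a b = top" "b \<in> compl_elems" using a compl_elems_sym by blast
      have "b \<notin> F" using a filter_grill[OF F b(1,2)] by simp
      then have "b \<notin> G" using eq b(3) by blast
      then show "a \<in> compl_elems \<inter> grill G" using a filter_grill[OF G b(1,2)] by simp
    next
      fix a assume a: "a \<in> compl_elems \<inter> grill G"
      obtain b where b: "inf a b = bot" "sup a b = top" "b \<in> compl_elems" using a compl_elems_sym by blast
      have "b \<notin> G" using a filter_grill[OF G b(1,2)] by simp
      then have "b \<notin> F" using eq b(3) by blast
      then show "a \<in> compl_elems \<inter> grill F" using a filter_grill[OF F b(1,2)] by simp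
    qed
    then show "lim_of \<nu> F = lim_of \<nu> G" unfolding lim_of_def by simp
  qed
qed

lemma cofr_Inf: "cofr_mor \<phi> \<Longrightarrow> \<phi> (Inf S) = Inf (\<phi> ` S)"
  unfolding cofr_mor_def by auto

lemma key_adh0:
  fixes \<phi> :: "'a::coframe \<Rightarrow> 'b::coframe"
  assumes phi: "cofr_mor \<phi>" and a: "a \<in> compl_elems"
    and conv: "\<forall>G. lfilter G \<longrightarrow> lim' G \<le> \<phi> (lim (\<phi> -` G))"
    and m: "\<forall>F. lfilter F \<longrightarrow> a \<in> grill F \<longrightarrow> lim F \<le> m"
  shows "adh0 lim' (\<phi> a) \<le> \<phi> m"
  unfolding adh0_def
proof (rule Sup_least, clarify)
  fix G assume G: "lfilter G" "\<phi> a \<in> grill G"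
  have "lim' G \<le> \<phi> (lim (\<phi> -` G))" using conv G by blast
  also have "\<dots> \<le> \<phi> m"
    using cofr_mono[OF phi] m preimage_filter[OF phi G(1)] grill_pre1[OF phi G(2)]
    unfolding mono_def by blast
  finally show "lim' G \<le> \<phi> m" .
qed

lemma gen_adh:
  fixes \<phi> :: "'a::coframe \<Rightarrow> 'b::coframe"
  assumes phi: "cofr_mor \<phi>"
    and k: "\<forall>a\<in>compl_elems. adh0 lim' (\<phi> a) \<le> \<phi> (\<mu> a)"
    and I: "\<mu> (ladj \<phi> y) = Inf {\<mu> a | a. a \<in> compl_elems \<and> ladj \<phi> y \<le> a}"
  shows "adh lim' y \<le> \<phi> (\<mu> (ladj \<phi> y))"
  unfolding I cofr_Inf[OF phi]
proof (rule Inf_greatest, clarify)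
  fix a assume a: "a \<in> compl_elems" "ladj \<phi> y \<le> a"
  have "y \<le> \<phi> a" using ladj_unit[OF phi, of y] cofr_mono[OF phi] a(2) unfolding mono_def
    by (meson order_trans)
  then have "adh lim' y \<le> adh0 lim' (\<phi> a)" unfolding adh_def
    by (intro Inf_lower) (use cofr_compl_elems[OF phi a(1)] in auto)
  also have "\<dots> \<le> \<phi> (\<mu> a)" using k a by blast
  finally show "adh lim' y \<le> \<phi> (\<mu> a)" .
qed

lemma gen_conv:
  fixes \<phi> :: "'a::coframe \<Rightarrow> 'b::coframe"
  assumes phi: "cofr_mor \<phi>" and mono: "mono \<nu>"
    and L: "\<forall>a\<in>compl_elems. \<forall>G. lfilter G \<longrightarrow> \<phi> a \<in> grill G \<longrightarrow> L' G \<le> N' (\<phi> a)"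
    and N: "\<forall>y. N' y \<le> \<phi> (\<nu> (ladj \<phi> y))"
  shows "conv_mor (lim_of \<nu>) L' \<phi>"
  unfolding conv_mor_def
proof (intro conjI allI impI phi)
  fix G :: "'b set" assume G: "lfilter G"
  show "L' G \<le> \<phi> (lim_of \<nu> (\<phi> -` G))"
    unfolding lim_of_def cofr_Inf[OF phi]
  proof (rule Inf_greatest, clarify)
    fix a assume a: "a \<in> compl_elems" "a \<in> grill (\<phi> -` G)"
    have "L' G \<le> N' (\<phi> a)" using L a grill_pre2[OF phi G a(1) a(2)] G by blast
    also have "\<dots> \<le> \<phi> (\<nu> (ladj \<phi> (\<phi> a)))" using N by blast
    also have "\<dots> \<le> \<phi> (\<nu> a)" using ladj_le[of "\<phi> a" \<phi> a] mono cofr_mono[OF phi]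
      unfolding mono_def by blast
    finally show "L' G \<le> \<phi> (\<nu> a)" .
  qed
qed

theorem mainTheorem9:
  shows
    "(\<forall>lim :: 'a::coframe set \<Rightarrow> 'a. pretop lim \<longrightarrow> adh_structure (adh lim))
   \<and> (\<forall>\<nu> :: 'a \<Rightarrow> 'a. adh_structure \<nu> \<longrightarrow> pretop (lim_of \<nu>) \<and> classical (lim_of \<nu>))
   \<and> (\<forall>(lim :: 'a set \<Rightarrow> 'a) (lim' :: 'b::coframe set \<Rightarrow> 'b) \<phi>.
        pretop lim \<longrightarrow> pretop lim' \<longrightarrow> conv_mor lim lim' \<phi> \<longrightarrow> adh_mor (adh lim) (adh lim') \<phi>)
   \<and> (\<forall>(\<nu> :: 'a \<Rightarrow> 'a) (\<nu>' :: 'b \<Rightarrow> 'b) \<phi>.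
        adh_structure \<nu> \<longrightarrow> adh_structure \<nu>' \<longrightarrow> adh_mor \<nu> \<nu>' \<phi> \<longrightarrow> conv_mor (lim_of \<nu>) (lim_of \<nu>') \<phi>)
   \<and> (\<forall>(\<nu> :: 'a \<Rightarrow> 'a) (lim' :: 'b set \<Rightarrow> 'b) \<phi>.
        adh_structure \<nu> \<longrightarrow> pretop lim' \<longrightarrow> cofr_mor \<phi> \<longrightarrow>
        (conv_mor (lim_of \<nu>) lim' \<phi> \<longleftrightarrow> adh_mor \<nu> (adh lim') \<phi>))"
proof (intro conjI allI impI)
  fix lim :: "'a set \<Rightarrow> 'a" show "adh_structure (adh lim)" by (rule partA)
next
  fix \<nu> :: "'a \<Rightarrow> 'a" assume "adh_structure \<nu>"
  then show "pretop (lim_of \<nu>)" "classical (lim_of \<nu>)" using partB by auto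
next
  fix lim :: "'a set \<Rightarrow> 'a" and lim' :: "'b set \<Rightarrow> 'b" and \<phi>
  assume c: "conv_mor lim lim' \<phi>"
  have phi: "cofr_mor \<phi>" using c unfolding conv_mor_def by blast
  show "adh_mor (adh lim) (adh lim') \<phi>"
    unfolding adh_mor_def
  proof (intro conjI allI phi)
    fix y
    show "adh lim' y \<le> \<phi> (adh lim (ladj \<phi> y))"
    proof (rule gen_adh[OF phi])
      show "\<forall>a\<in>compl_elems. adh0 lim' (\<phi> a) \<le> \<phi> (adh lim a)"
      proof
        fix a :: 'a assume a: "a \<in> compl_elems"
        show "adh0 lim' (\<phi> a) \<le> \<phi> (adh lim a)"
          unfolding adh_compl[OF a]
          by (rule key_adh0[OF phi a]) (use c adh0_upper in \<open>auto simp: conv_mor_def\<close>)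
      qed
      show "adh lim (ladj \<phi> y) = Inf {adh lim a |a. a \<in> compl_elems \<and> ladj \<phi> y \<le> a}"
        using partA unfolding adh_structure_def by blast
    qed
  qed
next
  fix \<nu> :: "'a \<Rightarrow> 'a" and \<nu>' :: "'b \<Rightarrow> 'b" and \<phi>
  assume n: "adh_structure \<nu>" "adh_structure \<nu>'" and m: "adh_mor \<nu> \<nu>' \<phi>"
  have phi: "cofr_mor \<phi>" using m unfolding adh_mor_def by blast
  show "conv_mor (lim_of \<nu>) (lim_of \<nu>') \<phi>"
  proof (rule gen_conv[OF phi])
    show "mono \<nu>" using n unfolding adh_structure_def by blast
    show "\<forall>y. \<nu>' y \<le> \<phi> (\<nu> (ladj \<phi> y))" using m unfolding adh_mor_def by blast
    show "\<forall>a\<in>compl_elems. \<forall>G. lfilter G \<longrightarrow> \<phi> a \<in> grill G \<longrightarrow> lim_of \<nu>' G \<le> \<nu>' (\<phi> a)"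
      unfolding lim_of_def using cofr_compl_elems[OF phi] by (auto intro!: Inf_lower)
  qed
next
  fix \<nu> :: "'a \<Rightarrow> 'a" and lim' :: "'b set \<Rightarrow> 'b" and \<phi> :: "'a \<Rightarrow> 'b"
  assume n: "adh_structure \<nu>" and phi: "cofr_mor \<phi>"
  show "conv_mor (lim_of \<nu>) lim' \<phi> = adh_mor \<nu> (adh lim') \<phi>"
  proof
    assume c: "conv_mor (lim_of \<nu>) lim' \<phi>"
    show "adh_mor \<nu> (adh lim') \<phi>"
      unfolding adh_mor_def
    proof (intro conjI allI phi)
      fix y
      show "adh lim' y \<le> \<phi> (\<nu> (ladj \<phi> y))"
      proof (rule gen_adh[OF phi])
        show "\<forall>a\<in>compl_elems. adh0 lim' (\<phi> a) \<le> \<phi> (\<nu> a)"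
        proof
          fix a :: 'a assume a: "a \<in> compl_elems"
          show "adh0 lim' (\<phi> a) \<le> \<phi> (\<nu> a)"
            by (rule key_adh0[OF phi a]) (use c a in \<open>auto simp: conv_mor_def lim_of_def intro!: Inf_lower\<close>)
        qed
        show "\<nu> (ladj \<phi> y) = Inf {\<nu> a |a. a \<in> compl_elems \<and> ladj \<phi> y \<le> a}"
          using n unfolding adh_structure_def by blast
      qed
    qed
  next
    assume m: "adh_mor \<nu> (adh lim') \<phi>"
    show "conv_mor (lim_of \<nu>) lim' \<phi>"
    proof (rule gen_conv[OF phi])
      show "mono \<nu>" using n unfolding adh_structure_def by blast
      show "\<forall>y. adh lim' y \<le> \<phi> (\<nu> (ladj \<phi> y))" using m unfolding adh_mor_def by blast
      show "\<forall>a\<in>compl_elems. \<forall>G. lfilter G \<longrightarrow> \<phi> a \<in> grill G \<longrightarrow> lim' G \<le> adh lim' (\<phi> a)"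
      proof (intro ballI allI impI)
        fix a G assume a: "a \<in> compl_elems" and G: "lfilter G" "\<phi> a \<in> grill G"
        have "adh lim' (\<phi> a) = adh0 lim' (\<phi> a)" using adh_compl cofr_compl_elems[OF phi a] by blast
        then show "lim' G \<le> adh lim' (\<phi> a)" using adh0_upper[OF G] by simp
      qed
    qed
  qed
qed

end
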